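(* Let $g\in C^\omega(\mathbb{R})$ with $g(v)>0$ for $v>0$, and $\beta\in\mathbb{R}$. The set $W^u_\beta(q_0)\cap N_0$ is non-empty and connected.
   Context: $N_1=\{(\eta,w)\in\mathbb{R}_{>0}\times\mathbb{R}:\eta^2w<1\}$, $N_0=\{(\eta,w)\in N_1:w>0\}$. The $(\eta,w)$-system on $N_1$: $\frac{d\eta}{dt}=\frac{\eta}{2}\big(1-3\eta\sqrt{1-\eta^2w}\big)-\frac32\beta\eta^2wg(w)$, $\frac{dw}{dt}=2w$. $q_0=(1/3,0)$ is an equilibrium (saddle with eigenvalues $-1/2$, $2$) and $W^u_\beta(q_0)$ is its unstable manifold. *)

theory Defs
  imports "HOL-Analysis.Analysis"
begin

definition real_analytic :: "(real \<Rightarrow> real) \<Rightarrow> bool" where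
  "real_analytic g \<longleftrightarrow>
     (\<forall>x. \<exists>r>0. \<exists>c::nat \<Rightarrow> real.
        \<forall>y. \<bar>y - x\<bar> < r \<longrightarrow> (\<lambda>n. c n * (y - x) ^ n) sums g y)"

definition N1 :: "(real \<times> real) set" where
  "N1 = {(\<eta>, w). \<eta> > 0 \<and> \<eta>\<^sup>2 * w < 1}"

definition N0 :: "(real \<times> real) set" where
  "N0 = {(\<eta>, w). (\<eta>, w) \<in> N1 \<and> w > 0}"

definition F :: "real \<Rightarrow> (real \<Rightarrow> real) \<Rightarrow> real \<times> real \<Rightarrow> real \<times> real" where
  "F \<beta> g p = (case p of (\<eta>, w) \<Rightarrow>
     (\<eta> / 2 * (1 - 3 * \<eta> * sqrt (1 - \<eta>\<^sup>2 * w)) - 3 / 2 * \<beta> * \<eta>\<^sup>2 * w * g w,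
      2 * w))"

definition q0 :: "real \<times> real" where
  "q0 = (1/3, 0)"

definition Wu :: "real \<Rightarrow> (real \<Rightarrow> real) \<Rightarrow> (real \<times> real) set" where
  "Wu \<beta> g = {p. \<exists>\<gamma> :: real \<Rightarrow> real \<times> real.
      \<gamma> 0 = p \<and>
      (\<forall>t\<le>0. \<gamma> t \<in> N1 \<and> (\<gamma> has_vector_derivative F \<beta> g (\<gamma> t)) (at t within {..0})) \<and>
      (\<gamma> \<longlongrightarrow> q0) at_bot}"

end

theory Submission
  imports Defs "HOL-Real_Asymp.Real_Asymp"
begin

lemma analytic_cont:
  assumes "real_analytic g" shows "isCont g x"
proof -
  obtain r c where r: "r>0" and hs: "\<forall>y. \<bar>y - x\<bar> < r \<longrightarrow> (\<lambda>n. c n * (y-x)^n) sums g y"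
    using assms unfolding real_analytic_def by blast
  have "\<bar>(x + r/2) - x\<bar> < r" using r by simp
  then have "(\<lambda>n. c n * ((x + r/2) - x)^n) sums g (x + r/2)" using hs by blast
  then have summ: "summable (\<lambda>n. c n * (r/2)^n)" by (simp add: sums_iff)
  have "isCont (\<lambda>z. \<Sum>n. c n * z^n) (x - x)" by (rule isCont_powser[OF summ]) (use r in simp)
  then have c1: "isCont (\<lambda>y. \<Sum>n. c n * (y - x)^n) x"
    using isCont_o2[where f="\<lambda>y. y - x" and a=x and g="\<lambda>z. \<Sum>n. c n * z^n"] by simp
  have "eventually (\<lambda>y. y \<in> ball x r) (nhds x)" using r by (intro eventually_nhds_in_open) auto
  then have ev: "eventually (\<lambda>y. (\<Sum>n. c n * (y - x)^n) = g y) (nhds x)"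
    by eventually_elim (use hs in \<open>auto simp: dist_real_def sums_iff abs_minus_commute\<close>)
  show ?thesis using isCont_cong[OF ev] c1 by simp
qed

lemma vd_fst: "(f has_vector_derivative v) Fl \<Longrightarrow> ((\<lambda>t. fst (f t)) has_real_derivative fst v) Fl"
  unfolding has_real_derivative_iff_has_vector_derivative has_vector_derivative_def
  by (drule has_derivative_fst) simp

lemma vd_snd: "(f has_vector_derivative v) Fl \<Longrightarrow> ((\<lambda>t. snd (f t)) has_real_derivative snd v) Fl"
  unfolding has_real_derivative_iff_has_vector_derivative has_vector_derivative_def
  by (drule has_derivative_snd) simp

lemma sqrt_lip:
  fixes p q :: real assumes "1/4 \<le> p" "1/4 \<le> q"
  shows "\<bar>sqrt p - sqrt q\<bar> \<le> \<bar>p - q\<bar>"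
proof -
  have sp: "sqrt p \<ge> 1/2" using assms real_sqrt_le_mono[of "1/4" p] by (simp add: real_sqrt_divide)
  have sq: "sqrt q \<ge> 1/2" using assms real_sqrt_le_mono[of "1/4" q] by (simp add: real_sqrt_divide)
  have "p - q = (sqrt p - sqrt q) * (sqrt p + sqrt q)" using assms by (simp add: algebra_simps)
  then have "\<bar>p - q\<bar> = \<bar>sqrt p - sqrt q\<bar> * (sqrt p + sqrt q)" using sp sq by (simp add: abs_mult)
  moreover have "\<bar>sqrt p - sqrt q\<bar> * 1 \<le> \<bar>sqrt p - sqrt q\<bar> * (sqrt p + sqrt q)"
    using sp sq by (intro mult_left_mono) auto
  ultimately show ?thesis by simp
qed

definition hh :: "real \<Rightarrow> (real \<Rightarrow> real) \<Rightarrow> real \<Rightarrow> real \<Rightarrow> real" where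
  "hh \<beta> g z U = 3/2 * (sqrt (1 - z / U^2) + \<beta> * z * g z)"

lemma quot_lip:
  fixes z U1 U2 :: real
  assumes "0 \<le> z" "2 \<le> U1" "U1 \<le> 4" "2 \<le> U2" "U2 \<le> 4"
  shows "\<bar>z/U1^2 - z/U2^2\<bar> \<le> z/2 * \<bar>U1 - U2\<bar>"
proof -
  have p1: "U1^2 \<ge> 4" "U2^2 \<ge> 4" using assms power_mono[of 2 U1 2] power_mono[of 2 U2 2] by auto
  have "U1^2 * U2^2 \<ge> 4 * 4" using p1 by (intro mult_mono) auto
  then have q: "(U1+U2)/(U1^2*U2^2) \<le> 1/2" using assms by (simp add: divide_simps)
  have q0: "(U1+U2)/(U1^2*U2^2) \<ge> 0" using assms by simp
  have eq: "z/U1^2 - z/U2^2 = z*(U2-U1)*((U1+U2)/(U1^2*U2^2))" using assms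
    by (simp add: field_simps power2_eq_square)
  have "\<bar>z/U1^2 - z/U2^2\<bar> = z*\<bar>U1-U2\<bar>*((U1+U2)/(U1^2*U2^2))"
    unfolding eq using assms q0 by (simp add: abs_mult abs_minus_commute)
  also have "\<dots> \<le> z*\<bar>U1-U2\<bar>*(1/2)" using q assms by (intro mult_left_mono) auto
  finally show ?thesis by simp
qed

lemma small_quot:
  fixes z U :: real assumes "0 \<le> z" "z \<le> 1" "2 \<le> U"
  shows "z/U^2 \<le> z/4" "z/U^2 \<le> 1/4" "0 \<le> z/U^2"
proof -
  have "U^2 \<ge> 4" using assms power_mono[of 2 U 2] by auto
  then show q: "z/U^2 \<le> z/4" using assms by (intro divide_left_mono) auto
  show "z/U^2 \<le> 1/4" using q assms by linarith
  show "0 \<le> z/U^2" using assms by simp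
qed

lemma hh_lip:
  assumes "0 \<le> z" "z \<le> 1" "2 \<le> U1" "U1 \<le> 4" "2 \<le> U2" "U2 \<le> 4"
  shows "\<bar>hh \<beta> g z U1 - hh \<beta> g z U2\<bar> \<le> 3/4 * z * \<bar>U1 - U2\<bar>"
proof -
  have a1: "1/4 \<le> 1 - z/U1^2" "1/4 \<le> 1 - z/U2^2"
    using small_quot(2)[OF assms(1,2,3)] small_quot(2)[OF assms(1,2,5)] by linarith+
  have "\<bar>sqrt (1 - z/U1^2) - sqrt (1 - z/U2^2)\<bar> \<le> \<bar>(1 - z/U1^2) - (1 - z/U2^2)\<bar>"
    by (rule sqrt_lip[OF a1])
  also have "\<dots> = \<bar>z/U1^2 - z/U2^2\<bar>" by simp
  also have "\<dots> \<le> z/2 * \<bar>U1 - U2\<bar>" using quot_lip assms by blast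
  finally have "\<bar>sqrt (1 - z/U1^2) - sqrt (1 - z/U2^2)\<bar> \<le> z/2 * \<bar>U1 - U2\<bar>" .
  moreover have "hh \<beta> g z U1 - hh \<beta> g z U2 = 3/2 * (sqrt (1 - z/U1^2) - sqrt (1 - z/U2^2))"
    unfolding hh_def by (simp add: algebra_simps)
  then have "\<bar>hh \<beta> g z U1 - hh \<beta> g z U2\<bar> = \<bar>3/2\<bar> * \<bar>sqrt (1 - z/U1^2) - sqrt (1 - z/U2^2)\<bar>"
    by (simp only: abs_mult[symmetric])
  then have "\<bar>hh \<beta> g z U1 - hh \<beta> g z U2\<bar> = 3/2 * \<bar>sqrt (1 - z/U1^2) - sqrt (1 - z/U2^2)\<bar>"
    by simp
  moreover have "3/2 * \<bar>sqrt (1 - z/U1^2) - sqrt (1 - z/U2^2)\<bar> \<le> 3/2 * (z/2 * \<bar>U1 - U2\<bar>)"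
    using calculation(1) by (rule mult_left_mono) auto
  ultimately show ?thesis by simp
qed

lemma sqrt_dev: fixes x :: real assumes "0 \<le> x" "x \<le> 1" shows "\<bar>sqrt (1 - x) - 1\<bar> \<le> x"
proof -
  have "sqrt (1-x) \<le> 1" using assms by simp
  moreover have "1 - x \<le> sqrt (1 - x)"
  proof -
    have "(1-x) = sqrt (1-x) * sqrt (1-x)" using assms by simp
    also have "\<dots> \<le> sqrt (1-x) * 1" using assms by (intro mult_left_mono) auto
    finally show ?thesis by simp
  qed
  ultimately show ?thesis by simp
qed

lemma hh_dev:
  assumes "0 \<le> z" "z \<le> 1" "2 \<le> U" "\<bar>g z\<bar> \<le> C"
  shows "\<bar>hh \<beta> g z U - 3/2\<bar> \<le> 3/2*(1/4 + \<bar>\<beta>\<bar>*C)*z"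
proof -
  have "\<bar>sqrt (1 - z/U^2) - 1\<bar> \<le> z/U^2"
    by (intro sqrt_dev; use small_quot[OF assms(1-3)] in linarith)
  then have s1: "\<bar>sqrt (1 - z/U^2) - 1\<bar> \<le> z/4"
    using small_quot[OF assms(1-3)] by linarith
  have s2: "\<bar>\<beta> * z * g z\<bar> \<le> \<bar>\<beta>\<bar> * C * z"
  proof -
    have "\<bar>\<beta> * z * g z\<bar> = \<bar>\<beta>\<bar> * z * \<bar>g z\<bar>" using assms by (simp add: abs_mult)
    also have "\<dots> \<le> \<bar>\<beta>\<bar> * z * C" using assms by (intro mult_left_mono) auto
    also have "\<dots> = \<bar>\<beta>\<bar> * C * z" by (simp add: ac_simps)
    finally show ?thesis .
  qed
  have "hh \<beta> g z U - 3/2 = 3/2 * ((sqrt (1 - z/U^2) - 1) + \<beta> * z * g z)"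
    unfolding hh_def by (simp add: algebra_simps)
  then have "\<bar>hh \<beta> g z U - 3/2\<bar> = \<bar>3/2\<bar> * \<bar>(sqrt (1 - z/U^2) - 1) + \<beta> * z * g z\<bar>"
    by (simp only: abs_mult[symmetric])
  also have "\<dots> = 3/2 * \<bar>(sqrt (1 - z/U^2) - 1) + \<beta> * z * g z\<bar>" by simp
  also have "\<dots> \<le> 3/2 * (\<bar>sqrt (1 - z/U^2) - 1\<bar> + \<bar>\<beta> * z * g z\<bar>)"
    by (intro mult_left_mono abs_triangle_ineq) auto
  also have "\<dots> \<le> 3/2 * (z/4 + \<bar>\<beta>\<bar> * C * z)" using s1 s2 by simp
  finally show ?thesis by (simp add: algebra_simps)
qed

lemma int_bound:
  fixes f :: "real \<Rightarrow> real"
  assumes "continuous_on UNIV f" "0 \<le> x" "0 \<le> B" "\<And>y. y \<in> {0..x} \<Longrightarrow> \<bar>f y\<bar> \<le> B"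
  shows "\<bar>integral {0..x} f\<bar> \<le> B * x"
proof -
  have "f integrable_on {0..x}"
    by (rule integrable_continuous_real) (rule continuous_on_subset[OF assms(1)], simp)
  from integrable_integral[OF this] have "(f has_integral integral {0..x} f) (cbox 0 x)" by simp
  from has_integral_bound[OF assms(3) this] assms(2,4) show ?thesis by (auto simp: content_real)
qed

definition clamp :: "real \<Rightarrow> real" where "clamp y = max 0 (min 2 y)"
definition ff :: "real \<Rightarrow> (real \<Rightarrow> real) \<Rightarrow> real \<Rightarrow> (real \<Rightarrow> real) \<Rightarrow> real \<Rightarrow> real" where
  "ff \<beta> g a U y = 2 * hh \<beta> g (a * (clamp y)^4) (U (clamp y)) - 3"
definition TT :: "real \<Rightarrow> (real \<Rightarrow> real) \<Rightarrow> real \<Rightarrow> (real \<Rightarrow> real) \<Rightarrow> real \<Rightarrow> real" where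
  "TT \<beta> g a U x = 3 + integral {0..x} (ff \<beta> g a U) / x"
definition DD :: "(real \<Rightarrow> real) set" where
  "DD = {U. continuous_on {0..2} U \<and> (\<forall>x\<in>{0..2}. 2 \<le> U x \<and> U x \<le> 4)}"

lemma clamp_in: "clamp y \<in> {0..2}" by (auto simp: clamp_def)
lemma clamp_id: "y \<in> {0..2} \<Longrightarrow> clamp y = y" by (auto simp: clamp_def)
lemma clamp_cont: "continuous_on UNIV clamp" unfolding clamp_def by (intro continuous_intros)

lemma DD_D: "U \<in> DD \<Longrightarrow> x \<in> {0..2} \<Longrightarrow> 2 \<le> U x \<and> U x \<le> 4" by (auto simp: DD_def)

definition Us :: "real \<Rightarrow> (real \<Rightarrow> real) \<Rightarrow> real \<Rightarrow> nat \<Rightarrow> real \<Rightarrow> real" where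
  "Us \<beta> g a n = ((TT \<beta> g a)^^n) (\<lambda>_. 3)"

context
  fixes \<beta> :: real and g :: "real \<Rightarrow> real" and C a K :: real
  assumes contg: "\<And>x. isCont g x"
    and Cpos: "C > 0" and Cb: "\<And>z. z \<in> {0..1} \<Longrightarrow> \<bar>g z\<bar> \<le> C"
    and a_def: "a = 1/(100 + 100*\<bar>\<beta>\<bar>*C)"
    and K_def: "K = 3*(1/4 + \<bar>\<beta>\<bar>*C)*a"
begin

lemma cst: "0 < a" "16*a \<le> 1" "24*a \<le> 1/2" "16*K \<le> 1/2" "0 \<le> K"
proof -
  have d: "100 + 100*\<bar>\<beta>\<bar>*C > 0" using Cpos by (simp add: add_pos_nonneg)
  have bc: "\<bar>\<beta>\<bar>*C \<ge> 0" using Cpos by simp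
  show a0: "0 < a" using d a_def by simp
  have eq: "a*100 + 100*(\<bar>\<beta>\<bar>*C*a) = 1" using d a_def by (simp add: field_simps)
  have nn: "\<bar>\<beta>\<bar>*C*a \<ge> 0" using bc a0 by simp
  have Ke: "K = 3/4*a + 3*(\<bar>\<beta>\<bar>*C*a)" using K_def by (simp add: algebra_simps)
  show "16*a \<le> 1" using eq nn by linarith
  show "24*a \<le> 1/2" using eq nn by linarith
  show "16*K \<le> 1/2" using eq nn Ke a0 by linarith
  show "0 \<le> K" using nn Ke a0 by linarith
qed

lemma zb: assumes "y \<in> {0..2}" shows "0 \<le> a*y^4" "a*y^4 \<le> 1" "a*y^4 \<le> 16*a"
proof -
  have "y^4 \<le> 2^4" using assms by (intro power_mono) auto
  then have "y^4 \<le> 16" by simp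
  then show "a*y^4 \<le> 16*a" using cst(1) by (simp add: mult.commute)
  then show "a*y^4 \<le> 1" using cst(2) by linarith
  show "0 \<le> a*y^4" using assms cst(1) by simp
qed

lemma ff_cont: assumes U: "U \<in> DD" shows "continuous_on UNIV (ff \<beta> g a U)"
proof -
  have Uc: "continuous_on {0..2} U" using U by (simp add: DD_def)
  have c1: "continuous_on UNIV (\<lambda>y. U (clamp y))"
    by (rule continuous_on_compose2[OF Uc clamp_cont]) (use clamp_in in auto)
  have gc: "continuous_on UNIV g" using contg by (simp add: continuous_at_imp_continuous_on)
  have c2: "continuous_on UNIV (\<lambda>y. g (a*(clamp y)^4))"
    by (rule continuous_on_compose2[OF gc]) (auto intro!: continuous_intros clamp_cont)
  have nz: "\<And>y. U (clamp y) \<noteq> 0" using DD_D[OF U clamp_in] by (metis not_numeral_le_zero)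
  show ?thesis unfolding ff_def hh_def
    by (intro continuous_intros c1 c2 clamp_cont; use nz in auto)
qed

lemma ff_dev: assumes U: "U \<in> DD" shows "\<bar>ff \<beta> g a U y\<bar> \<le> K*(clamp y)^4"
proof -
  let ?z = "a*(clamp y)^4"
  have z: "0 \<le> ?z" "?z \<le> 1" using zb[OF clamp_in] by auto
  have gz: "\<bar>g ?z\<bar> \<le> C" using z by (intro Cb) auto
  have h: "\<bar>hh \<beta> g ?z (U (clamp y)) - 3/2\<bar> \<le> 3/2*(1/4 + \<bar>\<beta>\<bar>*C)*?z"
    using DD_D[OF U clamp_in] z gz by (intro hh_dev) auto
  have e: "ff \<beta> g a U y = 2*(hh \<beta> g ?z (U (clamp y)) - 3/2)" by (simp add: ff_def)
  have "\<bar>ff \<beta> g a U y\<bar> = \<bar>2\<bar>*\<bar>hh \<beta> g ?z (U (clamp y)) - 3/2\<bar>" by (simp only: e abs_mult)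
  then have "\<bar>ff \<beta> g a U y\<bar> = 2*\<bar>hh \<beta> g ?z (U (clamp y)) - 3/2\<bar>" by simp
  also have "\<dots> \<le> 2*(3/2*(1/4 + \<bar>\<beta>\<bar>*C)*?z)" using h by (rule mult_left_mono) simp
  also have "2*(3/2*(1/4 + \<bar>\<beta>\<bar>*C)*?z) = K*(clamp y)^4" by (simp add: K_def algebra_simps)
  finally show ?thesis .
qed

lemma ff_lip:
  assumes U1: "U1 \<in> DD" and U2: "U2 \<in> DD" and e: "\<forall>y\<in>{0..2}. \<bar>U1 y - U2 y\<bar> \<le> e"
  shows "\<bar>ff \<beta> g a U1 y - ff \<beta> g a U2 y\<bar> \<le> e/2"
proof -
  let ?c = "clamp y"
  let ?z = "a*?c^4"
  have z: "0 \<le> ?z" "?z \<le> 1" "?z \<le> 16*a" using zb[OF clamp_in] by auto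
  have e1: "\<bar>U1 ?c - U2 ?c\<bar> \<le> e" using e clamp_in by blast
  have "\<bar>hh \<beta> g ?z (U1 ?c) - hh \<beta> g ?z (U2 ?c)\<bar> \<le> 3/4 * ?z * \<bar>U1 ?c - U2 ?c\<bar>"
    using DD_D[OF U1 clamp_in] DD_D[OF U2 clamp_in] z by (intro hh_lip) auto
  also have "\<dots> \<le> 3/4 * ((16*a) * e)"
  proof -
    have "?z * \<bar>U1 ?c - U2 ?c\<bar> \<le> (16*a) * e" by (rule mult_mono) (use z e1 in auto)
    then show ?thesis by (simp add: mult.assoc)
  qed
  also have "\<dots> \<le> e/4"
  proof -
    have "(48*a)*e \<le> 1*e" using cst(3) e1 by (intro mult_right_mono) auto
    then show ?thesis by simp
  qed
  finally have "\<bar>hh \<beta> g ?z (U1 ?c) - hh \<beta> g ?z (U2 ?c)\<bar> \<le> e/4" .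
  moreover have e2: "ff \<beta> g a U1 y - ff \<beta> g a U2 y = 2*(hh \<beta> g ?z (U1 ?c) - hh \<beta> g ?z (U2 ?c))"
    by (simp add: ff_def)
  have "\<bar>ff \<beta> g a U1 y - ff \<beta> g a U2 y\<bar> = \<bar>2\<bar>*\<bar>hh \<beta> g ?z (U1 ?c) - hh \<beta> g ?z (U2 ?c)\<bar>"
    by (simp only: e2 abs_mult)
  ultimately show ?thesis by simp
qed

lemma TT0: "TT \<beta> g a U 0 = 3" by (simp add: TT_def)

lemma ff_int: "U \<in> DD \<Longrightarrow> ff \<beta> g a U integrable_on {0..x}"
  by (rule integrable_continuous_real) (rule continuous_on_subset[OF ff_cont], auto)

lemma TT_dev: assumes U: "U \<in> DD" and x: "x \<in> {0..2}"
  shows "\<bar>TT \<beta> g a U x - 3\<bar> \<le> K*x^4"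
proof (cases "x = 0")
  case True then show ?thesis by (simp add: TT0)
next
  case False
  then have xp: "x > 0" using x by auto
  have "\<bar>integral {0..x} (ff \<beta> g a U)\<bar> \<le> (K*x^4)*x"
  proof (rule int_bound[OF ff_cont[OF U]])
    show "0 \<le> x" using xp by simp
    show "0 \<le> K*x^4" using cst(5) xp by simp
    fix y assume y: "y \<in> {0..x}"
    then have y2: "y \<in> {0..2}" using x by auto
    have "\<bar>ff \<beta> g a U y\<bar> \<le> K*(clamp y)^4" by (rule ff_dev[OF U])
    also have "\<dots> = K*y^4" using clamp_id[OF y2] by simp
    also have "\<dots> \<le> K*x^4" using y cst(5) by (intro mult_left_mono power_mono) auto
    finally show "\<bar>ff \<beta> g a U y\<bar> \<le> K*x^4" .
  qed
  moreover have "\<bar>TT \<beta> g a U x - 3\<bar> = \<bar>integral {0..x} (ff \<beta> g a U)\<bar> / x"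
    using xp by (simp add: TT_def)
  ultimately show ?thesis using xp by (simp add: pos_divide_le_eq)
qed

lemma TT_range: assumes U: "U \<in> DD" and x: "x \<in> {0..2}"
  shows "2 \<le> TT \<beta> g a U x \<and> TT \<beta> g a U x \<le> 4"
proof -
  have "x^4 \<le> 2^4" using x by (intro power_mono) auto
  then have "K*x^4 \<le> K*16" using cst(5) by (intro mult_left_mono) auto
  then show ?thesis using TT_dev[OF U x] cst(4) by (simp add: abs_le_iff)
qed

lemma TT_lip:
  assumes U1: "U1 \<in> DD" and U2: "U2 \<in> DD" and e: "\<forall>y\<in>{0..2}. \<bar>U1 y - U2 y\<bar> \<le> e"
    and x: "x \<in> {0..2}"
  shows "\<bar>TT \<beta> g a U1 x - TT \<beta> g a U2 x\<bar> \<le> e/2"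
proof (cases "x = 0")
  case True
  have "0 \<le> e" using e[rule_format, of 0] by auto
  then show ?thesis using True by (simp add: TT0)
next
  case False
  then have xp: "x > 0" using x by auto
  have e0: "0 \<le> e" using e[rule_format, of 0] by auto
  have "\<bar>integral {0..x} (\<lambda>y. ff \<beta> g a U1 y - ff \<beta> g a U2 y)\<bar> \<le> (e/2)*x"
  proof (rule int_bound)
    show "continuous_on UNIV (\<lambda>y. ff \<beta> g a U1 y - ff \<beta> g a U2 y)"
      using ff_cont[OF U1] ff_cont[OF U2] by (rule continuous_on_diff)
    show "0 \<le> x" using xp by simp
    show "0 \<le> e/2" using e0 by simp
    show "\<And>y. \<bar>ff \<beta> g a U1 y - ff \<beta> g a U2 y\<bar> \<le> e/2" using ff_lip[OF U1 U2 e] by blast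
  qed
  moreover have "integral {0..x} (\<lambda>y. ff \<beta> g a U1 y - ff \<beta> g a U2 y) =
      integral {0..x} (ff \<beta> g a U1) - integral {0..x} (ff \<beta> g a U2)"
    by (rule integral_diff[OF ff_int[OF U1] ff_int[OF U2]])
  moreover have "TT \<beta> g a U1 x - TT \<beta> g a U2 x =
      (integral {0..x} (ff \<beta> g a U1) - integral {0..x} (ff \<beta> g a U2)) / x"
    by (simp add: TT_def diff_divide_distrib)
  ultimately show ?thesis using xp by (simp add: pos_divide_le_eq abs_divide)
qed

lemma TT_deriv: assumes U: "U \<in> DD" and x: "0 < x" "x < 3"
  shows "(TT \<beta> g a U has_real_derivative (ff \<beta> g a U x + 3 - TT \<beta> g a U x)/x) (at x)"
proof -
  define M where "M = (\<lambda>x. integral {0..x} (ff \<beta> g a U))"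
  have w: "(M has_real_derivative ff \<beta> g a U x) (at x within {0..3})"
    unfolding M_def
    by (rule integral_has_real_derivative[OF continuous_on_subset[OF ff_cont[OF U]]]) (use x in auto)
  have "x \<in> interior {0..3}" unfolding interior_atLeastAtMost_real using x by simp
  then have i: "at x within {0..3} = at x" by (rule at_within_interior)
  from w have Md: "(M has_real_derivative ff \<beta> g a U x) (at x)" unfolding i .
  have d: "((\<lambda>x. M x / x) has_real_derivative (ff \<beta> g a U x * x - M x * 1)/(x*x)) (at x)"
    by (rule DERIV_divide[OF Md DERIV_ident]) (use x in simp)
  have *: "((\<lambda>x. 3 + M x / x) has_real_derivative 0 + (ff \<beta> g a U x * x - M x * 1)/(x*x)) (at x)"
    by (rule DERIV_add[OF DERIV_const d])
  have eqf: "TT \<beta> g a U = (\<lambda>x. 3 + M x / x)" by (rule ext) (simp add: TT_def M_def)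
  have tt: "TT \<beta> g a U x = 3 + M x / x" by (simp add: TT_def M_def)
  have eqv: "(ff \<beta> g a U x + 3 - TT \<beta> g a U x)/x = 0 + (ff \<beta> g a U x * x - M x * 1)/(x*x)"
    using x unfolding tt by (simp add: field_simps)
  show ?thesis by (subst eqv, subst eqf, rule *)
qed

lemma TT_cont: assumes U: "U \<in> DD" shows "continuous_on {0..2} (TT \<beta> g a U)"
  unfolding continuous_on_eq_continuous_within
proof
  fix x :: real assume x: "x \<in> {0..2}"
  show "continuous (at x within {0..2}) (TT \<beta> g a U)"
  proof (cases "x = 0")
    case True
    have ev: "eventually (\<lambda>y. y \<in> {0..2}) (at 0 within {0..2})"
      by (simp add: eventually_at_filter)
    have "((\<lambda>y. TT \<beta> g a U y - 3) \<longlongrightarrow> 0) (at 0 within {0..2})"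
    proof (rule Lim_null_comparison)
      show "eventually (\<lambda>y. norm (TT \<beta> g a U y - 3) \<le> K*y^4) (at 0 within {0..2})"
        using ev by eventually_elim (use TT_dev[OF U] in auto)
      have "((\<lambda>y. K*y^4) \<longlongrightarrow> K*0^4) (at 0 within {0..2})" by (intro tendsto_intros)
      then show "((\<lambda>y. K*y^4) \<longlongrightarrow> 0) (at 0 within {0..2})" by simp
    qed
    then have "(TT \<beta> g a U \<longlongrightarrow> 3) (at 0 within {0..2})" by (rule LIM_zero_cancel)
    then show ?thesis using True by (simp add: continuous_within TT0)
  next
    case False
    then have "0 < x" "x < 3" using x by auto
    from DERIV_isCont[OF TT_deriv[OF U this]] show ?thesis
      by (rule continuous_at_imp_continuous_at_within)
  qed
qed

lemma TT_DD: "U \<in> DD \<Longrightarrow> TT \<beta> g a U \<in> DD"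
  using TT_cont TT_range by (auto simp: DD_def)

lemma Us_Suc: "Us \<beta> g a (Suc n) = TT \<beta> g a (Us \<beta> g a n)" by (simp add: Us_def)

lemma Us_DD: "Us \<beta> g a n \<in> DD"
proof (induction n)
  case 0 show ?case by (simp add: Us_def DD_def continuous_on_const)
next
  case (Suc n) then show ?case by (simp add: Us_Suc TT_DD)
qed

lemma Us_step: "x \<in> {0..2} \<Longrightarrow> \<bar>Us \<beta> g a (Suc n) x - Us \<beta> g a n x\<bar> \<le> (1/2)^n"
proof (induction n arbitrary: x)
  case 0
  have "(\<lambda>_. 3::real) \<in> DD" by (simp add: DD_def continuous_on_const)
  from TT_range[OF this 0] show ?case by (simp add: Us_def abs_le_iff)
next
  case (Suc n)
  have "\<forall>y\<in>{0..2}. \<bar>Us \<beta> g a (Suc n) y - Us \<beta> g a n y\<bar> \<le> (1/2)^n" using Suc.IH by blast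
  from TT_lip[OF Us_DD Us_DD this Suc.prems] show ?case by (simp add: Us_Suc)
qed

lemma Us_cauchy: "x \<in> {0..2} \<Longrightarrow> \<bar>Us \<beta> g a (n+k) x - Us \<beta> g a n x\<bar> \<le> 2*(1/2)^n - 2*(1/2)^(n+k)"
proof (induction k)
  case 0 then show ?case by simp
next
  case (Suc k)
  have "\<bar>Us \<beta> g a (Suc (n+k)) x - Us \<beta> g a (n+k) x\<bar> \<le> (1/2)^(n+k)" using Us_step Suc.prems by blast
  moreover have "(1/2::real)^(n + Suc k) = (1/2)^(n+k) / 2" by simp
  ultimately show ?case using Suc by simp
qed

lemma Us_cauchy': "x \<in> {0..2} \<Longrightarrow> n \<le> m \<Longrightarrow> \<bar>Us \<beta> g a m x - Us \<beta> g a n x\<bar> \<le> 2*(1/2)^n"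
proof -
  assume x: "x \<in> {0..2}" and nm: "n \<le> m"
  then obtain k where m: "m = n + k" using le_Suc_ex by blast
  have "(0::real) \<le> 2*(1/2)^(n+k)" by simp
  then show ?thesis using Us_cauchy[OF x, of n k] unfolding m by linarith
qed

lemma fixpoint_exists: "\<exists>L\<in>DD. \<forall>x\<in>{0..2}. TT \<beta> g a L x = L x"
proof -
  have uc: "uniformly_Cauchy_on {0..2::real} (Us \<beta> g a)"
  proof (rule uniformly_Cauchy_onI)
    fix e :: real assume e: "e > 0"
    obtain M where M: "(1/2::real)^M < e/4" using real_arch_pow_inv[of "e/4" "1/2"] e by auto
    show "\<exists>M. \<forall>x\<in>{0..2::real}. \<forall>m\<ge>M. \<forall>n\<ge>M. dist (Us \<beta> g a m x) (Us \<beta> g a n x) < e"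
    proof (intro exI ballI allI impI)
      fix x :: real and m n assume x: "x \<in> {0..2}" and m: "M \<le> m" and n: "M \<le> n"
      have "\<bar>Us \<beta> g a m x - Us \<beta> g a M x\<bar> \<le> 2*(1/2)^M" by (rule Us_cauchy'[OF x m])
      moreover have "\<bar>Us \<beta> g a n x - Us \<beta> g a M x\<bar> \<le> 2*(1/2)^M" by (rule Us_cauchy'[OF x n])
      ultimately show "dist (Us \<beta> g a m x) (Us \<beta> g a n x) < e" using M by (simp add: dist_real_def)
    qed
  qed
  then obtain L where ul: "uniform_limit {0..2} (Us \<beta> g a) L sequentially"
    using Cauchy_uniformly_convergent uniformly_convergent_on_def by blast
  have lim: "(\<lambda>n. Us \<beta> g a n x) \<longlonglongrightarrow> L x" if "x \<in> {0..2}" for x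
    by (rule tendsto_uniform_limitI[OF ul that])
  have bnd: "\<bar>L x - Us \<beta> g a n x\<bar> \<le> 2*(1/2)^n" if x: "x \<in> {0..2}" for x n
  proof -
    have "(\<lambda>k. Us \<beta> g a (k + n) x) \<longlonglongrightarrow> L x" by (rule LIMSEQ_ignore_initial_segment[OF lim[OF x]])
    then have "(\<lambda>k. \<bar>Us \<beta> g a (k + n) x - Us \<beta> g a n x\<bar>) \<longlonglongrightarrow> \<bar>L x - Us \<beta> g a n x\<bar>"
      by (intro tendsto_intros)
    then show ?thesis by (rule LIMSEQ_le_const2) (use Us_cauchy'[OF x] in auto)
  qed
  have LD: "L \<in> DD"
  proof -
    have "continuous_on {0..2} L"
      by (rule uniform_limit_theorem[OF _ ul]) (use Us_DD in \<open>auto simp: DD_def\<close>)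
    moreover have "2 \<le> L x \<and> L x \<le> 4" if x: "x \<in> {0..2}" for x
    proof
      show "2 \<le> L x" by (rule LIMSEQ_le_const[OF lim[OF x]]) (use DD_D[OF Us_DD x] in auto)
      show "L x \<le> 4" by (rule LIMSEQ_le_const2[OF lim[OF x]]) (use DD_D[OF Us_DD x] in auto)
    qed
    ultimately show ?thesis by (simp add: DD_def)
  qed
  have "TT \<beta> g a L x = L x" if x: "x \<in> {0..2}" for x
  proof -
    have "((\<lambda>n. Us \<beta> g a (Suc n) x - TT \<beta> g a L x) \<longlonglongrightarrow> 0)"
    proof (rule Lim_null_comparison)
      show "eventually (\<lambda>n. norm (Us \<beta> g a (Suc n) x - TT \<beta> g a L x) \<le> (1/2)^n) sequentially"
      proof (rule always_eventually, rule allI)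
        fix n
        have "\<forall>y\<in>{0..2}. \<bar>Us \<beta> g a n y - L y\<bar> \<le> 2*(1/2)^n" using bnd by (simp add: abs_minus_commute)
        from TT_lip[OF Us_DD LD this x] show "norm (Us \<beta> g a (Suc n) x - TT \<beta> g a L x) \<le> (1/2)^n"
          by (simp add: Us_Suc)
      qed
      show "(\<lambda>n. (1/2::real)^n) \<longlonglongrightarrow> 0" by (rule LIMSEQ_realpow_zero) auto
    qed
    then have "(\<lambda>n. Us \<beta> g a (Suc n) x) \<longlonglongrightarrow> TT \<beta> g a L x" by (rule LIM_zero_cancel)
    moreover have "(\<lambda>n. Us \<beta> g a (Suc n) x) \<longlonglongrightarrow> L x" using lim[OF x] by (rule LIMSEQ_Suc)
    ultimately show ?thesis by (rule LIMSEQ_unique)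
  qed
  with LD show ?thesis by blast
qed

lemma F_eq:
  assumes u: "u \<noteq> 0"
  shows "F \<beta> g (1/u, z) = (-(hh \<beta> g z u - u/2)/(u*u), 2*z)"
proof -
  have s: "(1/u)^2 * z = z/u^2" by (simp add: power_divide)
  show ?thesis unfolding F_def hh_def s using u
    by (simp add: field_simps power2_eq_square)
qed

lemma wu_nonempty: "Wu \<beta> g \<inter> N0 \<noteq> {}"
proof -
  obtain L where LD: "L \<in> DD" and fx: "\<And>x. x \<in> {0..2} \<Longrightarrow> TT \<beta> g a L x = L x"
    using fixpoint_exists by blast
  define u where "u = (\<lambda>t. TT \<beta> g a L (exp (t/2)))"
  define \<gamma> where "\<gamma> = (\<lambda>t. (1 / u t, a * exp (2*t)))"
  have x4: "exp (t/2) ^ 4 = exp (2*t)" for t :: real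
    by (subst exp_of_nat_mult[symmetric]) simp
  have xin: "exp (t/2) \<in> {0..2}" "0 < exp (t/2)" "exp (t/2) < 3" if "t \<le> 0" for t :: real
  proof -
    have h: "exp (t/2) \<le> 1" using that by simp
    have h0: "0 < exp (t/2)" by simp
    show "exp (t/2) \<in> {0..2}" using h h0 by (simp only: atLeastAtMost_iff) linarith
    show "0 < exp (t/2)" by (rule h0)
    show "exp (t/2) < 3" using h by linarith
  qed
  have ur: "2 \<le> u t \<and> u t \<le> 4" if "t \<le> 0" for t
    unfolding u_def by (rule TT_range[OF LD xin(1)[OF that]])
  have udev: "\<bar>u t - 3\<bar> \<le> K * exp (2*t)" if "t \<le> 0" for t
    unfolding u_def using TT_dev[OF LD xin(1)[OF that]] x4 by simp
  have ud: "(u has_real_derivative hh \<beta> g (a * exp (2*t)) (u t) - u t / 2) (at t)" if t: "t \<le> 0" for t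
  proof -
    let ?x = "exp (t/2)"
    have Lx: "L ?x = u t" using fx[OF xin(1)[OF t]] by (simp add: u_def)
    have ffx: "ff \<beta> g a L ?x = 2 * hh \<beta> g (a * exp (2*t)) (u t) - 3"
      unfolding ff_def clamp_id[OF xin(1)[OF t]] Lx x4 ..
    have d1: "(TT \<beta> g a L has_real_derivative (ff \<beta> g a L ?x + 3 - TT \<beta> g a L ?x)/?x) (at ?x)"
      by (rule TT_deriv[OF LD xin(2,3)[OF t]])
    have d2: "((\<lambda>t. exp (t/2)) has_real_derivative exp (t/2) * (1/2)) (at t)"
      by (auto intro!: derivative_eq_intros)
    have D: "(u has_real_derivative (ff \<beta> g a L ?x + 3 - TT \<beta> g a L ?x)/?x * (exp (t/2) * (1/2))) (at t)"
      unfolding u_def by (rule DERIV_chain2[OF d1 d2])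
    have E: "(ff \<beta> g a L ?x + 3 - TT \<beta> g a L ?x)/?x * (exp (t/2) * (1/2)) =
        hh \<beta> g (a * exp (2*t)) (u t) - u t / 2"
      unfolding ffx using xin(2)[OF t] by (simp add: u_def field_simps)
    show ?thesis using D[unfolded E] .
  qed
  have traj: "\<gamma> t \<in> N1 \<and> (\<gamma> has_vector_derivative F \<beta> g (\<gamma> t)) (at t within {..0})" if t: "t \<le> 0" for t
  proof
    have u2: "2 \<le> u t" "u t \<le> 4" using ur[OF t] by auto
    have "(1/u t)^2 \<le> (1/2)^2" using u2 by (intro power_mono) (auto simp: divide_simps)
    moreover have "a * exp (2*t) \<le> a * 1" using t cst(1) by (intro mult_left_mono) auto
    moreover have "0 \<le> a * exp (2*t)" using cst(1) by simp
    ultimately have "(1/u t)^2 * (a * exp (2*t)) \<le> (1/2)^2 * (a*1)"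
      by (intro mult_mono) (use t in auto)
    moreover have "(1/2::real)^2 * (a*1) < 1" using cst(1,2) by (simp add: power2_eq_square)
    ultimately have Q: "(1/u t)^2 * (a * exp (2*t)) < 1" by linarith
    then show "\<gamma> t \<in> N1" unfolding \<gamma>_def N1_def using u2 by auto
    have e1: "((\<lambda>t. 1 / u t) has_real_derivative (0 * u t - 1 * (hh \<beta> g (a * exp (2*t)) (u t) - u t / 2)) / (u t * u t)) (at t)"
      by (rule DERIV_divide[OF DERIV_const ud[OF t]]) (use u2 in simp)
    have e2: "((\<lambda>t. a * exp (2*t)) has_real_derivative a * (exp (2*t) * 2)) (at t)"
      by (auto intro!: derivative_eq_intros)
    have "(\<gamma> has_vector_derivative ((0 * u t - 1 * (hh \<beta> g (a * exp (2*t)) (u t) - u t / 2)) / (u t * u t), a * (exp (2*t) * 2))) (at t)"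
      unfolding \<gamma>_def using e1 e2 by (intro has_vector_derivative_Pair) (simp_all add: has_real_derivative_iff_has_vector_derivative)
    moreover have "F \<beta> g (\<gamma> t) = ((0 * u t - 1 * (hh \<beta> g (a * exp (2*t)) (u t) - u t / 2)) / (u t * u t), a * (exp (2*t) * 2))"
      unfolding \<gamma>_def using u2 by (subst F_eq) auto
    ultimately show "(\<gamma> has_vector_derivative F \<beta> g (\<gamma> t)) (at t within {..0})"
      by (simp add: has_vector_derivative_at_within)
  qed
  have ulim: "(u \<longlongrightarrow> 3) at_bot"
  proof -
    have "((\<lambda>t. u t - 3) \<longlongrightarrow> 0) at_bot"
    proof (rule Lim_null_comparison)
      show "eventually (\<lambda>t. norm (u t - 3) \<le> K * exp (2*t)) at_bot"
        using eventually_le_at_bot[of 0] by eventually_elim (use udev in auto)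
      show "((\<lambda>t. K * exp (2*t)) \<longlongrightarrow> 0) at_bot" by real_asymp
    qed
    then show ?thesis by (rule LIM_zero_cancel)
  qed
  have "(\<gamma> \<longlongrightarrow> q0) at_bot"
  proof -
    have "((\<lambda>t. 1 / u t) \<longlongrightarrow> 1/3) at_bot" using ulim by (auto intro!: tendsto_eq_intros)
    moreover have "((\<lambda>t. a * exp (2*t)) \<longlongrightarrow> 0) at_bot" by real_asymp
    ultimately show ?thesis unfolding \<gamma>_def q0_def by (rule tendsto_Pair)
  qed
  then have "\<gamma> 0 \<in> Wu \<beta> g" unfolding Wu_def using traj by blast
  moreover have "\<gamma> 0 \<in> N0" using traj[of 0] cst(1) unfolding N0_def \<gamma>_def by auto
  ultimately show ?thesis by blast
qed

end

definition traj :: "real \<Rightarrow> (real \<Rightarrow> real) \<Rightarrow> real \<times> real \<Rightarrow> (real \<Rightarrow> real \<times> real) \<Rightarrow> bool" where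
  "traj \<beta> g p \<gamma> \<longleftrightarrow> \<gamma> 0 = p \<and>
      (\<forall>t\<le>0. \<gamma> t \<in> N1 \<and> (\<gamma> has_vector_derivative F \<beta> g (\<gamma> t)) (at t within {..0})) \<and>
      (\<gamma> \<longlongrightarrow> q0) at_bot"

lemma Wu_traj: "Wu \<beta> g = {p. \<exists>\<gamma>. traj \<beta> g p \<gamma>}" by (simp add: Wu_def traj_def)

lemma snd_F: "snd (F \<beta> g q) = 2 * snd q" by (cases q) (simp add: F_def)
lemma fst_F: "fst (F \<beta> g q) = fst q / 2 * (1 - 3 * fst q * sqrt (1 - (fst q)\<^sup>2 * snd q)) - 3 / 2 * \<beta> * (fst q)\<^sup>2 * snd q * g (snd q)"
  by (cases q) (simp add: F_def)

lemma traj_snd: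
  assumes tr: "traj \<beta> g p \<gamma>" and t: "t \<le> 0"
  shows "snd (\<gamma> t) = snd p * exp (2*t)"
proof -
  define w where "w = (\<lambda>s. snd (\<gamma> s))"
  have wd: "(w has_real_derivative 2 * w s) (at s within {..0})" if "s \<in> {..0}" for s
    using tr that unfolding traj_def w_def by (auto dest!: vd_snd simp: snd_F)
  have ed: "((\<lambda>s. exp (2 * s)) has_real_derivative exp (2 * s) * 2) (at s within {..0})" for s
    by (auto intro!: derivative_eq_intros)
  have d0: "((\<lambda>s. w s / exp (2 * s)) has_field_derivative 0) (at s within {..0})" if "s \<in> {..0}" for s
  proof -
    have "((\<lambda>s. w s / exp (2 * s)) has_field_derivative
       (2 * w s * exp (2 * s) - w s * (exp (2 * s) * 2)) / (exp (2 * s) * exp (2 * s))) (at s within {..0})"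
      by (rule DERIV_divide[OF wd[OF that] ed]) simp
    then show ?thesis by simp
  qed
  have "\<exists>c. \<forall>s\<in>{..0::real}. w s / exp (2 * s) = c"
    by (rule has_field_derivative_zero_constant[OF convex_real_interval(2) d0])
  then obtain c where c: "\<And>s. s \<in> {..0} \<Longrightarrow> w s / exp (2 * s) = c" by blast
  have "c = snd p" using c[of 0] tr by (simp add: traj_def w_def)
  then have "w t / exp (2 * t) = snd p" using c t by simp
  then show ?thesis by (simp add: field_simps w_def)
qed

lemma traj_shift:
  assumes tr: "traj \<beta> g p \<gamma>" and t: "t \<le> 0"
  shows "traj \<beta> g (\<gamma> t) (\<lambda>s. \<gamma> (s + t))"
  unfolding traj_def
proof (intro conjI allI impI)
  show "\<gamma> (0 + t) = \<gamma> t" by simp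
  fix s :: real assume s: "s \<le> 0"
  then show "\<gamma> (s + t) \<in> N1" using tr t unfolding traj_def by auto
  have d: "(\<gamma> has_vector_derivative F \<beta> g (\<gamma> (s+t))) (at (s+t) within {..0})"
    using tr s t unfolding traj_def by auto
  have img: "(\<lambda>s. s + t) ` {..0} \<subseteq> {..0}" using t by auto
  have "((\<gamma> \<circ> (\<lambda>s. s + t)) has_vector_derivative (1 *\<^sub>R F \<beta> g (\<gamma> (s+t)))) (at s within {..0})"
    by (rule vector_diff_chain_within)
      (auto intro!: derivative_eq_intros has_vector_derivative_within_subset[OF d img])
  then show "((\<lambda>s. \<gamma> (s + t)) has_vector_derivative F \<beta> g (\<gamma> (s + t))) (at s within {..0})"
    by (simp add: o_def)
next
  have "filterlim (\<lambda>s. s + t) at_bot at_bot" by real_asymp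
  moreover have "(\<gamma> \<longlongrightarrow> q0) at_bot" using tr by (simp add: traj_def)
  ultimately show "((\<lambda>s. \<gamma> (s + t)) \<longlongrightarrow> q0) at_bot" by (rule filterlim_compose[rotated])
qed

lemma traj_cont: "traj \<beta> g p \<gamma> \<Longrightarrow> continuous_on {..0} \<gamma>"
  unfolding traj_def continuous_on_eq_continuous_within
  by (auto intro: has_vector_derivative_continuous)

lemma key_ineq:
  fixes e1 e2 w B :: real
  assumes e: "1/4 \<le> e1" "e1 \<le> 1/2" "1/4 \<le> e2" "e2 \<le> 1/2" and w: "0 \<le> w" "w \<le> 1/3"
  shows "2*(1/e1 - 1/e2)*((-1/(2*e1) + 3/2* sqrt (1 - e1^2*w) + B) - (-1/(2*e2) + 3/2* sqrt (1 - e2^2*w) + B)) \<le> 0"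
proof -
  define D where "D = 1/e1 - 1/e2"
  define S where "S = sqrt (1 - e1^2*w) - sqrt (1 - e2^2*w)"
  have expr: "2*(1/e1 - 1/e2)*((-1/(2*e1) + 3/2* sqrt (1 - e1^2*w) + B) - (-1/(2*e2) + 3/2* sqrt (1 - e2^2*w) + B))
      = -(D*D) + 3*(D*S)"
    using e by (simp add: D_def S_def field_simps)
  have sq1: "e1^2 \<le> 1/4" "e2^2 \<le> 1/4"
    using e power_mono[of e1 "1/2" 2] power_mono[of e2 "1/2" 2] by (auto simp: power_divide)
  have a1: "e1^2*w \<le> 1/4*(1/3)" "e2^2*w \<le> 1/4*(1/3)" using sq1 w by (intro mult_mono; simp)+
  have hS: "\<bar>S\<bar> \<le> \<bar>e1^2*w - e2^2*w\<bar>"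
    unfolding S_def using sqrt_lip[of "1 - e1^2*w" "1 - e2^2*w"] a1 by (simp add: abs_minus_commute)
  have "e1 - e2 = -(e1*e2)*D" using e by (simp add: D_def field_simps)
  then have ea: "\<bar>e1 - e2\<bar> = (e1*e2)*\<bar>D\<bar>" using e by (simp add: abs_mult)
  have "e1*e2 \<le> 1/2*(1/2)" using e by (intro mult_mono) auto
  then have "(e1*e2)*\<bar>D\<bar> \<le> (1/4)*\<bar>D\<bar>" by (intro mult_right_mono) auto
  with ea have hD: "\<bar>e1 - e2\<bar> \<le> (1/4)*\<bar>D\<bar>" by simp
  have "e1^2*w - e2^2*w = w*(e1-e2)*(e1+e2)" by (simp add: power2_eq_square algebra_simps)
  then have "\<bar>e1^2*w - e2^2*w\<bar> = w*\<bar>e1-e2\<bar>*(e1+e2)" using e w by (simp add: abs_mult)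
  also have "\<dots> \<le> w*\<bar>e1-e2\<bar>*1" using e w by (intro mult_left_mono) auto
  also have "\<dots> \<le> w*((1/4)*\<bar>D\<bar>)" using hD w by (subst mult_1_right) (rule mult_left_mono)
  also have "\<dots> \<le> (1/3)*((1/4)*\<bar>D\<bar>)" using w by (intro mult_right_mono) auto
  finally have hS2: "\<bar>S\<bar> \<le> (1/12)*\<bar>D\<bar>" using hS by simp
  have "D*S \<le> \<bar>D\<bar>*\<bar>S\<bar>" by (metis abs_ge_self abs_mult)
  also have "\<dots> \<le> \<bar>D\<bar>*((1/12)*\<bar>D\<bar>)" using hS2 by (intro mult_left_mono) auto
  finally have h3: "D*S \<le> (1/12)*(\<bar>D\<bar>*\<bar>D\<bar>)" by simp
  have "\<bar>D\<bar>*\<bar>D\<bar> = D*D" by (simp add: abs_mult_self_eq)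
  moreover have "0 \<le> D*D" by simp
  ultimately show ?thesis unfolding expr using h3 by linarith
qed


lemma inv_eq:
  fixes e X W c \<beta> :: real
  assumes "e \<noteq> 0"
  shows "(0 * e - 1 * (e / 2 * (1 - 3 * e * sqrt X) - 3 / 2 * \<beta> * e\<^sup>2 * W * c)) / (e * e)
     = -1/(2*e) + 3/2 * sqrt X + 3/2 * \<beta> * W * c"
  using assms by (simp add: field_simps power2_eq_square)

lemma traj_meet_same:
  assumes tr1: "traj \<beta> g p \<gamma>" and tr2: "traj \<beta> g q \<delta>" and eqw: "snd p = snd q" and wp: "0 < snd p"
  shows "\<exists>t\<le>0. \<gamma> t = \<delta> t"
proof -
  define W where "W = (\<lambda>s. snd p * exp (2 * s))"
  define e1 where "e1 = (\<lambda>s. fst (\<gamma> s))"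
  define e2 where "e2 = (\<lambda>s. fst (\<delta> s))"
  have g1: "\<gamma> s = (e1 s, W s)" if "s \<le> 0" for s
    using traj_snd[OF tr1 that] by (simp add: e1_def W_def prod_eq_iff)
  have g2: "\<delta> s = (e2 s, W s)" if "s \<le> 0" for s
    using traj_snd[OF tr2 that] eqw by (simp add: e2_def W_def prod_eq_iff)
  have l1: "(e1 \<longlongrightarrow> 1/3) at_bot"
    using tendsto_fst[of \<gamma> q0 at_bot] tr1 unfolding traj_def e1_def q0_def by simp
  have l2: "(e2 \<longlongrightarrow> 1/3) at_bot"
    using tendsto_fst[of \<delta> q0 at_bot] tr2 unfolding traj_def e2_def q0_def by simp
  have lW: "(W \<longlongrightarrow> 0) at_bot" unfolding W_def by real_asymp
  have "eventually (\<lambda>s. s \<le> -1 \<and> 1/4 < e1 s \<and> e1 s < 1/2 \<and> 1/4 < e2 s \<and> e2 s < 1/2 \<and> W s < 1/3) at_bot"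
    using eventually_le_at_bot[of "-1::real"]
      order_tendstoD(1)[OF l1, of "1/4"] order_tendstoD(2)[OF l1, of "1/2"]
      order_tendstoD(1)[OF l2, of "1/4"] order_tendstoD(2)[OF l2, of "1/2"]
      order_tendstoD(2)[OF lW, of "1/3"]
    by (auto intro!: eventually_conj)
  then obtain N where N: "\<And>s. s \<le> N \<Longrightarrow> s \<le> -1 \<and> 1/4 < e1 s \<and> e1 s < 1/2 \<and> 1/4 < e2 s \<and> e2 s < 1/2 \<and> W s < 1/3"
    by (auto simp: eventually_at_bot_linorder)
  have N1: "N \<le> -1" using N[of N] by simp
  define D where "D = (\<lambda>s. 1 / e1 s - 1 / e2 s)"
  define G where "G = (\<lambda>e s. -1/(2*e) + 3/2 * sqrt (1 - e\<^sup>2 * W s) + 3/2 * \<beta> * W s * g (W s))"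
  have ud: "((\<lambda>s. 1 / fst (\<eta> s)) has_real_derivative G (fst (\<eta> s)) s) (at s)"
    if tr: "traj \<beta> g r \<eta>" and geq: "\<eta> s = (fst (\<eta> s), W s)" and s: "s < 0" and ne: "fst (\<eta> s) \<noteq> 0" for r \<eta> s
  proof -
    have "(\<eta> has_vector_derivative F \<beta> g (\<eta> s)) (at s within {..0})" using tr s unfolding traj_def by auto
    then have "(\<eta> has_vector_derivative F \<beta> g (\<eta> s)) (at s within {..<0})"
      by (rule has_vector_derivative_within_subset) auto
    then have "(\<eta> has_vector_derivative F \<beta> g (\<eta> s)) (at s)"
      using s by (subst (asm) has_vector_derivative_within_open) auto
    from vd_fst[OF this] have ed: "((\<lambda>s. fst (\<eta> s)) has_real_derivative fst (F \<beta> g (\<eta> s))) (at s)" .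
    have "((\<lambda>s. 1 / fst (\<eta> s)) has_real_derivative (0 * fst (\<eta> s) - 1 * fst (F \<beta> g (\<eta> s))) / (fst (\<eta> s) * fst (\<eta> s))) (at s)"
      by (rule DERIV_divide[OF DERIV_const ed ne])
    moreover have "(0 * fst (\<eta> s) - 1 * fst (F \<beta> g (\<eta> s))) / (fst (\<eta> s) * fst (\<eta> s)) = G (fst (\<eta> s)) s"
      unfolding fst_F G_def using inv_eq[OF ne] geq by (metis snd_conv)
    ultimately show ?thesis by simp
  qed
  have Dd: "(D has_real_derivative G (e1 s) s - G (e2 s) s) (at s)" if s: "s \<le> N" for s
  proof -
    have s0: "s < 0" "s \<le> 0" using N1 s by auto
    have pos: "e1 s \<noteq> 0" "e2 s \<noteq> 0" using N[OF s] by auto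
    have d1: "((\<lambda>s. 1 / e1 s) has_real_derivative G (e1 s) s) (at s)"
      using ud[OF tr1 _ s0(1)] g1[OF s0(2)] pos unfolding e1_def by simp
    have d2: "((\<lambda>s. 1 / e2 s) has_real_derivative G (e2 s) s) (at s)"
      using ud[OF tr2 _ s0(1)] g2[OF s0(2)] pos unfolding e2_def by simp
    show ?thesis unfolding D_def by (rule DERIV_diff[OF d1 d2])
  qed
  define Q where "Q = (\<lambda>s. D s * D s)"
  have Qd: "\<exists>y. (Q has_real_derivative y) (at s) \<and> y \<le> 0" if s: "s \<le> N" for s
  proof -
    have "(Q has_real_derivative (G (e1 s) s - G (e2 s) s) * D s + (G (e1 s) s - G (e2 s) s) * D s) (at s)"
      unfolding Q_def by (rule DERIV_mult[OF Dd[OF s] Dd[OF s]])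
    moreover have "(G (e1 s) s - G (e2 s) s) * D s + (G (e1 s) s - G (e2 s) s) * D s \<le> 0"
    proof -
      have Ws: "0 \<le> W s" using wp by (simp add: W_def)
      have "2*(1/e1 s - 1/e2 s)*((-1/(2*e1 s) + 3/2 * sqrt (1 - (e1 s)^2*W s) + 3/2 * \<beta> * W s * g (W s))
           - (-1/(2*e2 s) + 3/2 * sqrt (1 - (e2 s)^2*W s) + 3/2 * \<beta> * W s * g (W s))) \<le> 0"
        using N[OF s] Ws by (intro key_ineq) auto
      moreover have "(G (e1 s) s - G (e2 s) s) * D s + (G (e1 s) s - G (e2 s) s) * D s =
         2 * D s * (G (e1 s) s - G (e2 s) s)" by (simp add: algebra_simps)
      ultimately show ?thesis unfolding G_def D_def by linarith
    qed
    ultimately show ?thesis by blast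
  qed
  have QN: "Q N \<le> Q s" if "s \<le> N" for s
    by (rule DERIV_nonpos_imp_nonincreasing[OF that]) (use Qd in auto)
  have "(D \<longlongrightarrow> 1/(1/3) - 1/(1/3)) at_bot" unfolding D_def
    by (intro tendsto_intros l1 l2) auto
  then have D0: "(D \<longlongrightarrow> 0) at_bot" by simp
  have "(Q \<longlongrightarrow> 0 * 0) at_bot" unfolding Q_def by (rule tendsto_mult[OF D0 D0])
  then have Q0: "(Q \<longlongrightarrow> 0) at_bot" by simp
  have "Q N = 0"
  proof (rule ccontr)
    assume "Q N \<noteq> 0"
    moreover have "Q N \<ge> 0" unfolding Q_def by simp
    ultimately have "Q N > 0" by simp
    from order_tendstoD(2)[OF Q0 this] have "eventually (\<lambda>s. Q s < Q N \<and> s \<le> N) at_bot"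
      using eventually_le_at_bot[of N] by (auto intro: eventually_conj)
    then obtain s where "Q s < Q N" "s \<le> N" by (auto simp: eventually_at_bot_linorder)
    with QN show False by fastforce
  qed
  then have "D N = 0" unfolding Q_def by simp
  then have "e1 N = e2 N" using N[of N] by (simp add: D_def divide_simps)
  then have "\<gamma> N = \<delta> N" using g1[of N] g2[of N] N1 by simp
  then show ?thesis using N1 by (intro exI[of _ N]) simp
qed

lemma traj_meet_le:
  assumes tr1: "traj \<beta> g p \<gamma>" and tr2: "traj \<beta> g q \<delta>" and wp: "0 < snd p" and le: "snd p \<le> snd q"
  shows "\<exists>t1\<le>0. \<exists>t2\<le>0. \<gamma> t1 = \<delta> t2"
proof -
  define \<tau> where "\<tau> = ln (snd p / snd q) / 2"
  have wq: "0 < snd q" using wp le by linarith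
  have "snd p / snd q \<le> 1" using le wq by simp
  then have tau0: "\<tau> \<le> 0" unfolding \<tau>_def using wp wq by simp
  have ex: "exp (2 * \<tau>) = snd p / snd q" unfolding \<tau>_def using wp wq by simp
  have tr3: "traj \<beta> g (\<delta> \<tau>) (\<lambda>s. \<delta> (s + \<tau>))" by (rule traj_shift[OF tr2 tau0])
  have "snd (\<delta> \<tau>) = snd p" using traj_snd[OF tr2 tau0] ex wq by simp
  from traj_meet_same[OF tr1 tr3 this[symmetric] wp] obtain t where t: "t \<le> 0" "\<gamma> t = \<delta> (t + \<tau>)" by blast
  moreover have "t + \<tau> \<le> 0" using t tau0 by simp
  ultimately show ?thesis by blast
qed

lemma traj_meet:
  assumes tr1: "traj \<beta> g p \<gamma>" and tr2: "traj \<beta> g q \<delta>" and wp: "0 < snd p" and wq: "0 < snd q"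
  shows "\<exists>t1\<le>0. \<exists>t2\<le>0. \<gamma> t1 = \<delta> t2"
proof (cases "snd p \<le> snd q")
  case True then show ?thesis using traj_meet_le[OF tr1 tr2 wp] by blast
next
  case False
  then have "snd q \<le> snd p" by simp
  from traj_meet_le[OF tr2 tr1 wq this] show ?thesis by metis
qed

lemma N0_iff: "z \<in> N0 \<longleftrightarrow> z \<in> N1 \<and> 0 < snd z" by (cases z) (simp add: N0_def)

lemma conn: "connected (Wu \<beta> g \<inter> N0)"
proof (cases "Wu \<beta> g \<inter> N0 = {}")
  case True then show ?thesis by simp
next
  case False
  define S where "S = Wu \<beta> g \<inter> N0"
  obtain p0 where p0: "p0 \<in> S" using False S_def by blast
  have "\<forall>q\<in>S. \<exists>\<gamma>. traj \<beta> g q \<gamma>" unfolding S_def Wu_traj by blast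
  then obtain \<Gamma> where \<Gamma>: "\<And>q. q \<in> S \<Longrightarrow> traj \<beta> g q (\<Gamma> q)" by metis
  define Orb where "Orb = (\<lambda>q. \<Gamma> q ` {..0})"
  have sub: "Orb q \<subseteq> S" if q: "q \<in> S" for q
  proof
    fix z assume "z \<in> Orb q"
    then obtain t where t: "t \<le> 0" "z = \<Gamma> q t" unfolding Orb_def by auto
    have "traj \<beta> g (\<Gamma> q t) (\<lambda>s. \<Gamma> q (s + t))" by (rule traj_shift[OF \<Gamma>[OF q] t(1)])
    then have "z \<in> Wu \<beta> g" unfolding Wu_traj t by blast
    moreover have "\<Gamma> q t \<in> N1" using \<Gamma>[OF q] t unfolding traj_def by auto
    moreover have "0 < snd q" using q unfolding S_def by (simp add: N0_iff)
    then have "0 < snd (\<Gamma> q t)" using traj_snd[OF \<Gamma>[OF q] t(1)] by simp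
    ultimately show "z \<in> S" unfolding S_def using t by (simp add: N0_iff)
  qed
  have qin: "q \<in> Orb q" if "q \<in> S" for q
    using \<Gamma>[OF that] unfolding Orb_def traj_def by force
  have conO: "connected (Orb q)" if "q \<in> S" for q
    unfolding Orb_def by (rule connected_continuous_image[OF traj_cont[OF \<Gamma>[OF that]] connected_Iic])
  have meet: "Orb p0 \<inter> Orb q \<noteq> {}" if q: "q \<in> S" for q
  proof -
    have "0 < snd p0" "0 < snd q" using p0 q unfolding S_def by (auto simp: N0_iff)
    from traj_meet[OF \<Gamma>[OF p0] \<Gamma>[OF q] this] obtain t1 t2 where
      "t1 \<le> 0" "t2 \<le> 0" "\<Gamma> p0 t1 = \<Gamma> q t2" by blast
    then have "\<Gamma> p0 t1 \<in> Orb p0 \<inter> Orb q" unfolding Orb_def by (metis IntI atMost_iff imageI)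
    then show ?thesis by blast
  qed
  have eq: "S = \<Union> ((\<lambda>q. Orb p0 \<union> Orb q) ` S)"
    using sub qin p0 by blast
  have "connected (\<Union> ((\<lambda>q. Orb p0 \<union> Orb q) ` S))"
  proof (rule connected_Union)
    fix T assume "T \<in> (\<lambda>q. Orb p0 \<union> Orb q) ` S"
    then obtain q where q: "q \<in> S" "T = Orb p0 \<union> Orb q" by blast
    show "connected T" unfolding q(2) by (rule connected_Un[OF conO[OF p0] conO[OF q(1)] meet[OF q(1)]])
  next
    have "p0 \<in> \<Inter> ((\<lambda>q. Orb p0 \<union> Orb q) ` S)" using qin[OF p0] by blast
    then show "\<Inter> ((\<lambda>q. Orb p0 \<union> Orb q) ` S) \<noteq> {}" by blast
  qed
  then show ?thesis using eq S_def by simp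
qed


theorem lemmaA3:
  fixes g :: "real \<Rightarrow> real" and \<beta> :: real
  assumes "real_analytic g"
    and "\<forall>v>0. g v > 0"
  shows "Wu \<beta> g \<inter> N0 \<noteq> {} \<and> connected (Wu \<beta> g \<inter> N0)"
proof -
  have contg: "\<And>x. isCont g x" using analytic_cont assms(1) by blast
  have "compact (g ` {0..1})"
    by (rule compact_continuous_image) (auto simp: continuous_at_imp_continuous_on contg)
  then obtain B where B: "\<And>y. y \<in> g ` {0..1} \<Longrightarrow> norm y \<le> B"
    using compact_imp_bounded bounded_iff by metis
  define C where "C = max B 1"
  have Cpos: "C > 0" unfolding C_def by simp
  have Cb: "\<bar>g z\<bar> \<le> C" if "z \<in> {0..1}" for z
  proof -
    have "norm (g z) \<le> B" using B that by blast
    then show ?thesis unfolding C_def by simp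
  qed
  have ne: "Wu \<beta> g \<inter> N0 \<noteq> {}" by (rule wu_nonempty[OF contg Cpos Cb refl refl])
  show ?thesis using ne conn by blast
qed

end
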